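(* Let $S$ be a ground set, $f$ a function from subsets of $S$ to subsets of $S$, $t\ge 1$ an integer and $u=\lfloor(\frac{t}{2}+1)^2\rfloor$. A set $\mathcal{C}\subseteq S$ is a $t$-parent-identifying scheme under the $f$-channel if and only if every subset $\mathcal{C}'\subseteq\mathcal{C}$ with $|\mathcal{C}'|\le u$ is a $t$-parent-identifying scheme under the $f$-channel.
   Context: Here $S$ is $Q^n$ or $2^Q$ for a finite set $Q$. A set $\mathcal{D}\subseteq S$ is a $t$-parent-identifying scheme under the $f$-channel if for every $\mathcal{D}'\subseteq\mathcal{D}$ with $|\mathcal{D}'|\le t$ and every $d\in f(\mathcal{D}')$, we have $\bigcap_{\mathcal{P}\subseteq\mathcal{D}:\,|\mathcal{P}|\le t,\ d\in f(\mathcal{P})}\mathcal{P}\neq\emptyset$. *)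

theory Defs
  imports Complex_Main
begin

text \<open>t-parent-identifying scheme under the f-channel (ground set implicit in the type;
parent sets and coalitions are finite sets of size at most t).\<close>
definition t_PI :: "('a set \<Rightarrow> 'a set) \<Rightarrow> nat \<Rightarrow> 'a set \<Rightarrow> bool" where
  "t_PI f t D \<longleftrightarrow>
     (\<forall>D'. D' \<subseteq> D \<and> finite D' \<and> card D' \<le> t \<longrightarrow>
        (\<forall>d \<in> f D'. \<Inter>{P. P \<subseteq> D \<and> finite P \<and> card P \<le> t \<and> d \<in> f P} \<noteq> {}))"

end

theory Submission
  imports Defs
begin

lemma t_PI_mono:
  assumes "t_PI f t C" "C' \<subseteq> C"
  shows "t_PI f t C'"
  unfolding t_PI_def
proof (intro allI impI ballI)
  fix D' d assume D': "D' \<subseteq> C' \<and> finite D' \<and> card D' \<le> t" and d: "d \<in> f D'"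
  have "\<Inter>{P. P \<subseteq> C \<and> finite P \<and> card P \<le> t \<and> d \<in> f P} \<noteq> {}"
    using assms D' d unfolding t_PI_def by blast
  moreover have "\<Inter>{P. P \<subseteq> C \<and> finite P \<and> card P \<le> t \<and> d \<in> f P}
      \<subseteq> \<Inter>{P. P \<subseteq> C' \<and> finite P \<and> card P \<le> t \<and> d \<in> f P}"
    using assms(2) by blast
  ultimately show "\<Inter>{P. P \<subseteq> C' \<and> finite P \<and> card P \<le> t \<and> d \<in> f P} \<noteq> {}" by blast
qed

lemma arith_bound:
  fixes t k c :: nat
  assumes "c + k * k + 2 * k \<le> 2 * t + k * t"
  shows "c \<le> nat \<lfloor>(real t / 2 + 1) ^ 2\<rfloor>"
proof -
  have "real c + real k * real k + 2 * real k \<le> 2 * real t + real k * real t"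
    using assms by (metis of_nat_add of_nat_le_iff of_nat_mult of_nat_numeral)
  moreover have "0 \<le> (real t - 2 - 2 * real k)^2" by simp
  ultimately have "real c \<le> (real t / 2 + 1) ^ 2"
    by (simp add: power2_eq_square algebra_simps)
  hence "int c \<le> \<lfloor>(real t / 2 + 1) ^ 2\<rfloor>"
    by (metis floor_mono floor_of_nat)
  thus ?thesis by linarith
qed

lemma reverse_dir:
  assumes fin: "finite C"
    and H: "\<forall>C'. C' \<subseteq> C \<and> finite C' \<and> card C' \<le> nat \<lfloor>(real t / 2 + 1) ^ 2\<rfloor> \<longrightarrow> t_PI f t C'"
  shows "t_PI f t C"
proof (rule ccontr)
  assume "\<not> t_PI f t C"
  then obtain D' d where D': "D' \<subseteq> C" "finite D'" "card D' \<le> t" and d: "d \<in> f D'"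
    and E: "\<Inter>{P. P \<subseteq> C \<and> finite P \<and> card P \<le> t \<and> d \<in> f P} = {}"
    unfolding t_PI_def by blast
  define F where "F = {P. P \<subseteq> C \<and> finite P \<and> card P \<le> t \<and> d \<in> f P}"
  have D'F: "D' \<in> F" using D' d F_def by blast
  have ex: "\<exists>n Q1 Q2. Q1 \<in> F \<and> Q2 \<in> F \<and> card (Q1 \<inter> Q2) = n" using D'F by blast
  define k where "k = (LEAST n. \<exists>Q1 Q2. Q1 \<in> F \<and> Q2 \<in> F \<and> card (Q1 \<inter> Q2) = n)"
  obtain P1 P2 where P12: "P1 \<in> F" "P2 \<in> F" "card (P1 \<inter> P2) = k"
    using LeastI_ex[of "\<lambda>n. \<exists>Q1 Q2. Q1 \<in> F \<and> Q2 \<in> F \<and> card (Q1 \<inter> Q2) = n"] ex k_def by blast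
  have kmin: "k \<le> card (Q1 \<inter> Q2)" if "Q1 \<in> F" "Q2 \<in> F" for Q1 Q2
    unfolding k_def using that by (intro Least_le) blast
  have "\<forall>x. \<exists>P\<in>F. x \<notin> P" using E F_def by blast
  then obtain g where g: "\<And>x. g x \<in> F" "\<And>x. x \<notin> g x" by metis
  define I where "I = P1 \<inter> P2"
  define C' where "C' = P1 \<union> P2 \<union> (\<Union>x\<in>I. g x - (P1 \<union> P2))"
  have finF: "\<And>P. P \<in> F \<Longrightarrow> finite P \<and> P \<subseteq> C \<and> card P \<le> t \<and> d \<in> f P" using F_def by blast
  have finI: "finite I" using finF[OF P12(1)] I_def by blast
  have C'C: "C' \<subseteq> C" using finF g P12 unfolding C'_def by blast
  have finC': "finite C'" using C'C fin finite_subset by blast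
  have per: "card (g x - (P1 \<union> P2)) + k + 1 \<le> t" if x: "x \<in> I" for x
  proof -
    let ?G = "g x"
    have fG: "finite ?G" "card ?G \<le> t" using finF g(1) by blast+
    have a1: "k \<le> card (?G \<inter> P1)" using kmin g(1) P12 by blast
    have a2: "k \<le> card (?G \<inter> P2)" using kmin g(1) P12 by blast
    have u: "card (?G \<inter> P1 \<union> ?G \<inter> P2) + card (?G \<inter> P1 \<inter> (?G \<inter> P2)) = card (?G \<inter> P1) + card (?G \<inter> P2)"
      using card_Un_Int[of "?G \<inter> P1" "?G \<inter> P2"] fG(1) by simp
    have sub: "?G \<inter> P1 \<inter> (?G \<inter> P2) \<subseteq> I - {x}" using g(2) I_def by blast
    have "card (?G \<inter> P1 \<inter> (?G \<inter> P2)) \<le> card (I - {x})"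
      by (rule card_mono) (use finI sub in auto)
    also have "\<dots> = k - 1" using x finI P12(3) I_def by simp
    finally have c3: "card (?G \<inter> P1 \<inter> (?G \<inter> P2)) \<le> k - 1" .
    have kpos: "k \<ge> 1" using x finI P12(3) I_def by (metis card_0_eq empty_iff less_one not_less)
    have eq2: "?G \<inter> P1 \<union> ?G \<inter> P2 = ?G \<inter> (P1 \<union> P2)" by blast
    have d: "card (?G - (P1 \<union> P2)) + card (?G \<inter> (P1 \<union> P2)) = card ?G"
      using fG(1) by (metis add.commute card_Int_Diff)
    have eq3: "card (?G \<inter> P1 \<union> ?G \<inter> P2) = card (?G \<inter> (P1 \<union> P2))" using eq2 by simp
    show ?thesis using u eq3 d c3 a1 a2 fG kpos by linarith
  qed
  have "card C' \<le> card (P1 \<union> P2) + card (\<Union>x\<in>I. g x - (P1 \<union> P2))"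
    unfolding C'_def by (rule card_Un_le)
  also have "card (\<Union>x\<in>I. g x - (P1 \<union> P2)) \<le> (\<Sum>x\<in>I. card (g x - (P1 \<union> P2)))"
    by (rule card_UN_le[OF finI])
  finally have c1: "card C' \<le> card (P1 \<union> P2) + (\<Sum>x\<in>I. card (g x - (P1 \<union> P2)))" by simp
  have "(\<Sum>x\<in>I. card (g x - (P1 \<union> P2)) + (k + 1)) \<le> (\<Sum>x\<in>I. t)"
    by (rule sum_mono) (use per in auto)
  moreover have "(\<Sum>x\<in>I. card (g x - (P1 \<union> P2)) + (k + 1)) = (\<Sum>x\<in>I. card (g x - (P1 \<union> P2))) + card I * (k + 1)"
    by (subst sum.distrib) simp
  moreover have "card I = k" using P12(3) I_def by simp
  ultimately have c2: "(\<Sum>x\<in>I. card (g x - (P1 \<union> P2))) + k * (k + 1) \<le> k * t"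
    by simp
  have c0: "card (P1 \<union> P2) + k = card P1 + card P2"
    using card_Un_Int[of P1 P2] finF P12 by simp
  have "card P1 \<le> t" "card P2 \<le> t" using finF P12 by auto
  hence "card C' + k * k + 2 * k \<le> 2 * t + k * t"
    using c0 c1 c2 by (simp add: algebra_simps)
  hence cu: "card C' \<le> nat \<lfloor>(real t / 2 + 1) ^ 2\<rfloor>" by (rule arith_bound)
  have tpi: "t_PI f t C'" using H C'C finC' cu by blast
  have P1C': "P1 \<subseteq> C'" unfolding C'_def by blast
  have "\<Inter>{P. P \<subseteq> C' \<and> finite P \<and> card P \<le> t \<and> d \<in> f P} \<noteq> {}"
    using tpi P1C' finF[OF P12(1)] unfolding t_PI_def by blast
  then obtain y where y: "\<And>P. P \<subseteq> C' \<Longrightarrow> finite P \<Longrightarrow> card P \<le> t \<Longrightarrow> d \<in> f P \<Longrightarrow> y \<in> P"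
    by blast
  have "y \<in> P1" "y \<in> P2" using y finF P12 unfolding C'_def by blast+
  hence yI: "y \<in> I" using I_def by blast
  have "g y \<subseteq> C'" using yI unfolding C'_def by blast
  hence "y \<in> g y" using y finF g(1) by blast
  thus False using g(2) by blast
qed

theorem corollary1:
  fixes S :: "'a set" and f :: "'a set \<Rightarrow> 'a set" and t u :: nat and C :: "'a set"
  assumes "finite S"
    and "\<And>X. X \<subseteq> S \<Longrightarrow> f X \<subseteq> S"
    and "t \<ge> 1"
    and "u = nat \<lfloor>(real t / 2 + 1) ^ 2\<rfloor>"
    and "C \<subseteq> S"
  shows "t_PI f t C \<longleftrightarrow>
           (\<forall>C'. C' \<subseteq> C \<and> finite C' \<and> card C' \<le> u \<longrightarrow> t_PI f t C')"
proof
  assume "t_PI f t C" thus "\<forall>C'. C' \<subseteq> C \<and> finite C' \<and> card C' \<le> u \<longrightarrow> t_PI f t C'"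
    using t_PI_mono by blast
next
  assume "\<forall>C'. C' \<subseteq> C \<and> finite C' \<and> card C' \<le> u \<longrightarrow> t_PI f t C'"
  moreover have "finite C" using assms(1,5) by (rule rev_finite_subset)
  ultimately show "t_PI f t C" using reverse_dir[of C t f] assms(4) by simp
qed

end
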